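(* Let $G$ be a free group on $k\ge 2$ generators and let $m\ge 1$. Let $\Phi$ be a linear action of $G$ on $\mathbb R^m$ (i.e. each $f_g=\Phi(g,\cdot)$ is an invertible linear map of $\mathbb R^m$), where $\mathbb R^m$ carries the Euclidean metric. Then $\Phi$ does not have the shadowing property.
   Context: An action of a group $G$ on a metric space $(\Omega,\mathrm{dist})$ is a map $\Phi:G\times\Omega\to\Omega$ such that each $f_g=\Phi(g,\cdot)$ is a homeomorphism, $\Phi(e,x)=x$, and $\Phi(g_1g_2,x)=\Phi(g_1,\Phi(g_2,x))$. Fix a finite symmetric generating set $S$ of $G$ (e.g. the free generators and their inverses; the property below does not depend on this choice). For $d>0$, a family $\{y_g\}_{g\in G}\subset\Omega$ is a $d$-pseudotrajectory if $\mathrm{dist}(y_{sg},f_s(y_g))<d$ for all $s\in S$, $g\in G$. The action has the shadowing property if for every $\varepsilon>0$ there is $d>0$ such that for every $d$-pseudotrajectory $\{y_g\}_{g\in G}$ there is $x_e\in\Omega$ with $\mathrm{dist}(y_g,f_g(x_e))<\varepsilon$ for all $g\in G$. *)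

theory Defs
  imports "HOL-Analysis.Analysis"
begin

text \<open>A letter (i, True) is the generator a_i, (i, False) is its inverse a_i^-1.
  Elements of the free group F_k on generators a_0, ..., a_(k-1) are reduced words
  over these letters; the empty word is the identity.\<close>

type_synonym fletter = "nat \<times> bool"
type_synonym fword = "fletter list"

fun reduced :: "fword \<Rightarrow> bool" where
  "reduced [] = True"
| "reduced [a] = True"
| "reduced (a # b # w) = (\<not> (fst a = fst b \<and> snd a \<noteq> snd b) \<and> reduced (b # w))"

definition free_carrier :: "nat \<Rightarrow> fword set" where
  "free_carrier k = {w. (\<forall>a\<in>set w. fst a < k) \<and> reduced w}"

fun red_cons :: "fletter \<Rightarrow> fword \<Rightarrow> fword" where
  "red_cons a [] = [a]"
| "red_cons a (b # w) = (if fst a = fst b \<and> snd a \<noteq> snd b then w else a # b # w)"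

definition free_mult :: "fword \<Rightarrow> fword \<Rightarrow> fword" where
  "free_mult w v = foldr red_cons w v"

definition free_one :: fword where
  "free_one = []"

definition free_gens :: "nat \<Rightarrow> fword set" where
  "free_gens k = {[(i, b)] | i b. i < k}"

definition free_action :: "nat \<Rightarrow> (fword \<Rightarrow> 'a::metric_space \<Rightarrow> 'a) \<Rightarrow> bool" where
  "free_action k \<Phi> \<longleftrightarrow>
     (\<forall>g\<in>free_carrier k. \<exists>h. homeomorphism UNIV UNIV (\<Phi> g) h) \<and>
     (\<forall>x. \<Phi> free_one x = x) \<and>
     (\<forall>g1\<in>free_carrier k. \<forall>g2\<in>free_carrier k. \<forall>x.
        \<Phi> (free_mult g1 g2) x = \<Phi> g1 (\<Phi> g2 x))"

definition pseudotrajectory ::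
  "nat \<Rightarrow> (fword \<Rightarrow> 'a::metric_space \<Rightarrow> 'a) \<Rightarrow> real \<Rightarrow> (fword \<Rightarrow> 'a) \<Rightarrow> bool" where
  "pseudotrajectory k \<Phi> d y \<longleftrightarrow>
     (\<forall>s\<in>free_gens k. \<forall>g\<in>free_carrier k. dist (y (free_mult s g)) (\<Phi> s (y g)) < d)"

definition has_shadowing :: "nat \<Rightarrow> (fword \<Rightarrow> 'a::metric_space \<Rightarrow> 'a) \<Rightarrow> bool" where
  "has_shadowing k \<Phi> \<longleftrightarrow>
     (\<forall>\<epsilon>>0. \<exists>d>0. \<forall>y. pseudotrajectory k \<Phi> d y \<longrightarrow>
        (\<exists>x. \<forall>g\<in>free_carrier k. dist (y g) (\<Phi> g x) < \<epsilon>))"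

lemma "free_mult [(0, True)] [(0, False), (1, True)] = [(1, True)]"
  by (simp add: free_mult_def)
lemma "free_mult [(0, True), (1, False)] [(1, True), (0, True)] = [(0, True), (0, True)]"
  by (simp add: free_mult_def)

end

theory Submission
  imports Defs
begin


lemma family_dependent:
  fixes x :: "nat \<Rightarrow> 'a::euclidean_space"
  shows "\<exists>\<beta>. (\<exists>i\<le>DIM('a). \<beta> i \<noteq> 0) \<and> (\<Sum>j\<le>DIM('a). \<beta> j *\<^sub>R x j) = 0"
proof (cases "inj_on x {..DIM('a)}")
  case True
  let ?S = "x ` {..DIM('a)}"
  have "card ?S = Suc DIM('a)" using True by (simp add: card_image)
  then have "dependent ?S" by (intro dependent_biggerset) auto
  then obtain u where u: "\<exists>v\<in>?S. u v \<noteq> 0" "(\<Sum>v\<in>?S. u v *\<^sub>R v) = 0"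
    using dependent_finite[of ?S] by auto
  have "(\<Sum>v\<in>?S. u v *\<^sub>R v) = (\<Sum>j\<le>DIM('a). u (x j) *\<^sub>R x j)"
    using sum.reindex[OF True, of "\<lambda>v. u v *\<^sub>R v"] by simp
  then show ?thesis using u by (intro exI[of _ "\<lambda>j. u (x j)"]) auto
next
  case False
  then obtain i j where ij: "i \<le> DIM('a)" "j \<le> DIM('a)" "i \<noteq> j" "x i = x j"
    unfolding inj_on_def by auto
  define \<beta> where "\<beta> = (\<lambda>l. (if l = i then 1 else 0) - (if l = j then (1::real) else 0))"
  have "(\<Sum>l\<le>DIM('a). \<beta> l *\<^sub>R x l) = (\<Sum>l\<le>DIM('a). (if l = i then x i else 0)) - (\<Sum>l\<le>DIM('a). (if l = j then x j else 0))"
  proof -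
    have "\<And>l. \<beta> l *\<^sub>R x l = (if l = i then x i else 0) - (if l = j then x j else 0)"
      using ij(3) by (auto simp: \<beta>_def)
    then show ?thesis by (simp add: sum_subtractf)
  qed
  also have "\<dots> = 0" using ij by simp
  finally show ?thesis using ij by (intro exI[of _ \<beta>]) (auto simp: \<beta>_def)
qed



lemma reduced_append_left: "reduced (xs @ ys) \<Longrightarrow> reduced xs"
  by (induction xs rule: reduced.induct) auto

lemma reduced_append_right: "reduced (xs @ ys) \<Longrightarrow> reduced ys"
proof (induction xs)
  case (Cons x xs) then show ?case by (cases xs; cases ys) auto
qed simp

lemma reduced_Cons: "reduced (x # xs) \<Longrightarrow> reduced xs"
  using reduced_append_right[of "[x]" xs] by simp

lemma reduced_join:
  "reduced (xs @ [y]) \<Longrightarrow> reduced (y # ys) \<Longrightarrow> reduced (xs @ y # ys)"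
  by (induction xs rule: reduced.induct) auto

lemma reduced_replicate: "reduced (replicate n x)"
proof (induction n)
  case (Suc n) then show ?case by (cases n) auto
qed simp

lemma foldr_red_cons_reduced: "reduced (xs @ ys) \<Longrightarrow> foldr red_cons xs ys = xs @ ys"
proof (induction xs)
  case (Cons x xs)
  then have "foldr red_cons xs ys = xs @ ys" using reduced_Cons by auto
  then show ?case using Cons.prems by (cases "xs @ ys") auto
qed simp

lemma free_mult_reduced: "reduced (xs @ ys) \<Longrightarrow> free_mult xs ys = xs @ ys"
  by (simp add: free_mult_def foldr_red_cons_reduced)

lemma free_mult_single: "free_mult [s] g = red_cons s g"
  by (simp add: free_mult_def)

lemma red_cons_reduced: "reduced g \<Longrightarrow> reduced (red_cons s g)"
  by (cases g) (auto dest: reduced_Cons)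

lemma red_cons_carrier: "g \<in> free_carrier k \<Longrightarrow> fst s < k \<Longrightarrow> red_cons s g \<in> free_carrier k"
  unfolding free_carrier_def
  by (cases g) (auto dest: reduced_Cons)

lemma red_cons_length: "length (red_cons s g) = Suc (length g) \<or> Suc (length (red_cons s g)) = length g"
  by (cases g) auto

lemma free_mult_replicate:
  "free_mult (replicate n (i, False)) (replicate (n + p) (i, True)) = replicate p (i, True)"
proof (induction n arbitrary: p)
  case (Suc n)
  have "free_mult (replicate (Suc n) (i, False)) (replicate (Suc n + p) (i, True))
      = red_cons (i, False) (free_mult (replicate n (i, False)) (replicate (n + Suc p) (i, True)))"
    by (simp add: free_mult_def)
  also have "\<dots> = replicate p (i, True)" using Suc.IH[of "Suc p"] by simp
  finally show ?case .
qed (simp add: free_mult_def)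

lemma append_Nil_eq: "xs @ v = v \<Longrightarrow> xs = []" by simp

lemma region_leave:
  assumes "v \<noteq> []" "red_cons s (h @ v) \<notin> {g. \<exists>h. g = h @ v}"
  shows "h = [] \<and> s = (fst (hd v), \<not> snd (hd v))"
proof (cases h)
  case Nil
  then show ?thesis using assms by (cases v; cases s; auto split: if_splits)
next
  case (Cons x h')
  then show ?thesis using assms by (auto split: if_splits)
qed

lemma region_enter:
  assumes "v \<noteq> []" "g \<notin> {g. \<exists>h. g = h @ v}" "red_cons s g \<in> {g. \<exists>h. g = h @ v}"
  shows "red_cons s g = v"
proof (cases g)
  case Nil
  then show ?thesis using assms by (auto simp: Cons_eq_append_conv)
next
  case (Cons x g')
  show ?thesis
  proof (cases "fst s = fst x \<and> snd s \<noteq> snd x")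
    case True then show ?thesis using assms Cons by auto
  next
    case False
    then obtain h where "s # x # g' = h @ v" using assms Cons by auto
    then show ?thesis using assms Cons False by (cases h) auto
  qed
qed



lemma uniform_bound:
  fixes F :: "'i \<Rightarrow> 'a::euclidean_space \<Rightarrow> 'b::real_normed_vector"
  assumes lin: "\<forall>h\<in>H. linear (F h)" and pw: "\<forall>z. \<exists>K. \<forall>h\<in>H. norm (F h z) \<le> K"
  shows "\<exists>M>0. \<forall>h\<in>H. \<forall>x. norm (F h x) \<le> M * norm x"
proof -
  obtain Kf where Kf: "\<And>z h. h \<in> H \<Longrightarrow> norm (F h z) \<le> Kf z" using pw by metis
  define M where "M = 1 + (\<Sum>i\<in>Basis. \<bar>Kf i\<bar>)"
  have "M > 0" unfolding M_def by (simp add: add_pos_nonneg sum_nonneg)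
  moreover have "norm (F h x) \<le> M * norm x" if h: "h \<in> H" for h x
  proof -
    have "F h x = F h (\<Sum>i\<in>Basis. (x \<bullet> i) *\<^sub>R i)" by (simp add: euclidean_representation)
    also have "\<dots> = (\<Sum>i\<in>Basis. (x \<bullet> i) *\<^sub>R F h i)"
      using lin h by (simp add: linear_sum linear_scale)
    finally have "norm (F h x) \<le> (\<Sum>i\<in>Basis. norm ((x \<bullet> i) *\<^sub>R F h i))"
      by (metis norm_sum)
    also have "\<dots> \<le> (\<Sum>i\<in>Basis. norm x * \<bar>Kf i\<bar>)"
    proof (rule sum_mono)
      fix i :: 'a assume i: "i \<in> Basis"
      have "norm ((x \<bullet> i) *\<^sub>R F h i) = \<bar>x \<bullet> i\<bar> * norm (F h i)" by simp
      also have "\<dots> \<le> norm x * \<bar>Kf i\<bar>"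
        using Kf[OF h, of i] Basis_le_norm[OF i, of x]
        by (intro mult_mono) auto
      finally show "norm ((x \<bullet> i) *\<^sub>R F h i) \<le> norm x * \<bar>Kf i\<bar>" .
    qed
    also have "\<dots> \<le> M * norm x" unfolding M_def by (simp add: sum_distrib_left[symmetric] algebra_simps)
    finally show ?thesis .
  qed
  ultimately show ?thesis by blast
qed

lemma gens_carrier: "s \<in> free_gens k \<Longrightarrow> s \<in> free_carrier k"
  by (auto simp: free_gens_def free_carrier_def)

context
  fixes k :: nat and \<Phi> :: "fword \<Rightarrow> real^'m \<Rightarrow> real^'m"
  assumes k2: "k \<ge> 2"
    and act: "free_action k \<Phi>"
    and lin: "\<forall>g\<in>free_carrier k. linear (\<Phi> g) \<and> bij (\<Phi> g)"
begin

lemma act_mult: "g1 \<in> free_carrier k \<Longrightarrow> g2 \<in> free_carrier k \<Longrightarrow> \<Phi> (free_mult g1 g2) x = \<Phi> g1 (\<Phi> g2 x)"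
  using act unfolding free_action_def by blast

lemma act_one: "\<Phi> [] x = x"
  using act unfolding free_action_def free_one_def by blast

lemma linG: "g \<in> free_carrier k \<Longrightarrow> linear (\<Phi> g)" using lin by blast

lemma shadow_bounded:
  assumes sh: "has_shadowing k \<Phi>"
    and err: "\<forall>s\<in>free_gens k. \<forall>g\<in>free_carrier k. norm (y (free_mult s g) - \<Phi> s (y g)) \<le> G"
  shows "\<exists>x K. \<forall>g\<in>free_carrier k. norm (y g - \<Phi> g x) \<le> K"
proof -
  obtain d where d: "d > 0" and dsh: "\<And>y. pseudotrajectory k \<Phi> d y \<Longrightarrow>
      (\<exists>x. \<forall>g\<in>free_carrier k. dist (y g) (\<Phi> g x) < 1)"
    using sh unfolding has_shadowing_def by (meson zero_less_one)
  define l where "l = d / (2 * (\<bar>G\<bar> + 1))"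
  have l: "l > 0" using d by (simp add: l_def add_pos_nonneg)
  have "l * \<bar>G\<bar> < d"
  proof -
    have "l * \<bar>G\<bar> = d * (\<bar>G\<bar> / (2 * (\<bar>G\<bar> + 1)))" by (simp add: l_def)
    also have "\<dots> < d * 1" using d by (intro mult_strict_left_mono) (auto simp: field_simps)
    finally show ?thesis by simp
  qed
  have "pseudotrajectory k \<Phi> d (\<lambda>g. l *\<^sub>R y g)"
    unfolding pseudotrajectory_def
  proof (intro ballI)
    fix s g assume s: "s \<in> free_gens k" and g: "g \<in> free_carrier k"
    have "dist (l *\<^sub>R y (free_mult s g)) (\<Phi> s (l *\<^sub>R y g)) = l * norm (y (free_mult s g) - \<Phi> s (y g))"
      using linG[OF gens_carrier[OF s]] l
      by (simp add: dist_norm linear_scale scaleR_diff_right[symmetric])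
    also have "\<dots> \<le> l * \<bar>G\<bar>" using err s g l by (intro mult_left_mono) force+
    finally show "dist (l *\<^sub>R y (free_mult s g)) (\<Phi> s (l *\<^sub>R y g)) < d" using \<open>l * \<bar>G\<bar> < d\<close> by simp
  qed
  then obtain x where x: "\<forall>g\<in>free_carrier k. dist (l *\<^sub>R y g) (\<Phi> g x) < 1" using dsh by blast
  have "norm (y g - \<Phi> g (x /\<^sub>R l)) \<le> 1 / l" if g: "g \<in> free_carrier k" for g
  proof -
    have "\<Phi> g x = l *\<^sub>R \<Phi> g (x /\<^sub>R l)" using linG[OF g] l by (simp add: linear_scale)
    then have "dist (l *\<^sub>R y g) (\<Phi> g x) = l * norm (y g - \<Phi> g (x /\<^sub>R l))"
      using l by (simp add: dist_norm scaleR_diff_right[symmetric])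
    then have "l * norm (y g - \<Phi> g (x /\<^sub>R l)) \<le> 1" using x g by (metis less_imp_le)
    then show ?thesis using l by (simp add: field_simps)
  qed
  then show ?thesis by blast
qed

definition region :: "fword \<Rightarrow> fword set" where
  "region v = {g. \<exists>h. g = h @ v}"

lemma reduced_rep_snoc: "reduced (replicate n (0::nat, bb) @ [(1, True)])"
proof (induction n)
  case (Suc n) then show ?case by (cases n) auto
qed simp

lemma reduced_v: "reduced ((1::nat, True) # replicate j (0, True))"
proof (cases j)
  case (Suc n)
  have "reduced (replicate (Suc n) (0::nat, True))" by (rule reduced_replicate)
  then show ?thesis using Suc by simp
qed simp

lemma rep_b_inj: "replicate i (0::nat, True) @ (1, True) # xs = replicate j (0, True) @ (1, True) # ys \<Longrightarrow> i = j"
proof (induction i arbitrary: j)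
  case 0 then show ?case by (cases j) auto
next
  case (Suc i) then show ?case by (cases j) auto
qed

lemma region_disjoint:
  assumes "i \<noteq> j" "(g::fword) \<in> region ((1, True) # replicate i (0, True))"
  shows "g \<notin> region ((1, True) # replicate j (0, True))"
proof
  assume "g \<in> region ((1, True) # replicate j (0, True))"
  then obtain h h' where "g = h @ (1, True) # replicate i (0, True)" "g = h' @ (1, True) # replicate j (0, True)"
    using assms unfolding region_def by auto
  then have "rev (h @ (1, True) # replicate i (0, True)) = rev (h' @ (1, True) # replicate j (0, True))" by simp
  then have "replicate i (0::nat, True) @ (1, True) # rev h = replicate j (0, True) @ (1, True) # rev h'" by simp
  then show False using rep_b_inj assms(1) by blast
qed

lemma region_pt:
  assumes v: "v \<noteq> []"
    and inside: "\<And>s g. s \<in> free_gens k \<Longrightarrow> g \<in> free_carrier k \<Longrightarrow> g \<in> region v \<Longrightarrow>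
        free_mult s g \<in> region v \<Longrightarrow> norm (Y (free_mult s g) - \<Phi> s (Y g)) \<le> G"
  shows "\<exists>G'. \<forall>s\<in>free_gens k. \<forall>g\<in>free_carrier k.
     norm ((\<lambda>g. if g \<in> region v then Y g else 0) (free_mult s g)
       - \<Phi> s ((\<lambda>g. if g \<in> region v then Y g else 0) g)) \<le> G'"
proof -
  define G' where "G' = \<bar>G\<bar> + norm (Y v) + norm (\<Phi> [(fst (hd v), \<not> snd (hd v))] (Y v))"
  have "norm ((\<lambda>g. if g \<in> region v then Y g else 0) (free_mult s g)
       - \<Phi> s ((\<lambda>g. if g \<in> region v then Y g else 0) g)) \<le> G'"
    if s: "s \<in> free_gens k" and g: "g \<in> free_carrier k" for s g
  proof -
    obtain s0 where s0: "s = [s0]" "fst s0 < k" using s unfolding free_gens_def by auto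
    have fm: "free_mult s g = red_cons s0 g" using s0 by (simp add: free_mult_single)
    have l0: "\<Phi> s 0 = 0" using linG[OF gens_carrier[OF s]] by (simp add: linear_0)
    have nn: "0 \<le> norm (Y v)" "0 \<le> norm (\<Phi> [(fst (hd v), \<not> snd (hd v))] (Y v))" by simp_all
    consider (II) "g \<in> region v" "free_mult s g \<in> region v"
      | (IO) "g \<in> region v" "free_mult s g \<notin> region v"
      | (OI) "g \<notin> region v" "free_mult s g \<in> region v"
      | (OO) "g \<notin> region v" "free_mult s g \<notin> region v" by blast
    then show ?thesis
    proof cases
      case II
      have e: "norm (Y (free_mult s g) - \<Phi> s (Y g)) \<le> G" using inside[OF s g II] .
      have "G \<le> G'" using nn abs_ge_self[of G] unfolding G'_def by linarith
      then show ?thesis using II e by simp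
    next
      case IO
      then obtain h where h: "g = h @ v" unfolding region_def by auto
      have "h = [] \<and> s0 = (fst (hd v), \<not> snd (hd v))"
        using region_leave[OF v, of s0 h] IO h fm unfolding region_def by auto
      then have "g = v" "s = [(fst (hd v), \<not> snd (hd v))]" using h s0 by auto
      then show ?thesis using IO nn unfolding G'_def by auto
    next
      case OI
      then have "red_cons s0 g = v" using region_enter[OF v, of g s0] fm unfolding region_def by auto
      then show ?thesis using OI nn l0 fm unfolding G'_def by auto
    next
      case OO
      then show ?thesis using nn l0 unfolding G'_def by auto
    qed
  qed
  then show ?thesis by blast
qed

lemma hv_carrier:
  assumes "h @ [(1, True)] \<in> free_carrier k"
  shows "h @ ((1, True) # replicate j (0, True)) \<in> free_carrier k \<and> h \<in> free_carrier k
    \<and> (\<forall>x. \<Phi> (h @ ((1, True) # replicate j (0, True))) x = \<Phi> h (\<Phi> ((1, True) # replicate j (0, True)) x))"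
proof -
  have red: "reduced (h @ ((1, True) # replicate j (0, True)))"
    using assms reduced_join[of h "(1,True)" "replicate j (0, True)"] reduced_v[of j]
    unfolding free_carrier_def by auto
  have c1: "h @ ((1, True) # replicate j (0, True)) \<in> free_carrier k"
    using red assms k2 unfolding free_carrier_def by auto
  have c2: "h \<in> free_carrier k"
    using assms reduced_append_left[of h "[(1,True)]"] unfolding free_carrier_def by auto
  have c3: "(1::nat, True) # replicate j (0, True) \<in> free_carrier k"
    using k2 reduced_v[of j] unfolding free_carrier_def by auto
  show ?thesis using c1 c2 act_mult[OF c2 c3] free_mult_reduced[OF red] by auto
qed

lemma region_prefix:
  assumes "g \<in> free_carrier k" "g \<in> region ((1, True) # replicate j (0, True))"
  shows "\<exists>h. g = h @ ((1, True) # replicate j (0, True)) \<and> h @ [(1, True)] \<in> free_carrier k"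
proof -
  obtain h where h: "g = h @ ((1, True) # replicate j (0, True))" using assms(2) unfolding region_def by auto
  then have "reduced ((h @ [(1, True)]) @ replicate j (0, True))" using assms(1) unfolding free_carrier_def by simp
  then have "reduced (h @ [(1, True)])" by (rule reduced_append_left)
  then have "h @ [(1, True)] \<in> free_carrier k" using assms(1) h k2 unfolding free_carrier_def by auto
  then show ?thesis using h by blast
qed

lemma Phi_inv: "g \<in> free_carrier k \<Longrightarrow> \<Phi> g (inv (\<Phi> g) z) = z"
  using lin by (meson bij_is_surj surj_f_inv_f)

lemma family_contra:
  fixes y :: "nat \<Rightarrow> fword \<Rightarrow> real^'m" and R :: "nat \<Rightarrow> fword set"
  assumes sh: "has_shadowing k \<Phi>"
    and err: "\<And>j. \<exists>G. \<forall>s\<in>free_gens k. \<forall>g\<in>free_carrier k. norm (y j (free_mult s g) - \<Phi> s (y j g)) \<le> G"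
    and zero: "\<And>i j g. i \<noteq> j \<Longrightarrow> g \<in> R i \<Longrightarrow> y j g = 0"
    and unb: "\<And>j K. \<exists>g\<in>free_carrier k. g \<in> R j \<and> norm (y j g) > K"
  shows False
proof -
  have "\<forall>j. \<exists>x K. \<forall>g\<in>free_carrier k. norm (y j g - \<Phi> g x) \<le> K"
    using shadow_bounded[OF sh] err by metis
  then obtain x K where xK: "\<And>j g. g \<in> free_carrier k \<Longrightarrow> norm (y j g - \<Phi> g (x j)) \<le> K j"
    by metis
  let ?D = "DIM(real^'m)"
  obtain \<beta> i where i: "i \<le> ?D" "\<beta> i \<noteq> 0" and dep: "(\<Sum>j\<le>?D. \<beta> j *\<^sub>R x j) = 0"
    using family_dependent[of x] by blast
  define K' where "K' = (\<Sum>j\<le>?D. \<bar>\<beta> j\<bar> * K j) / \<bar>\<beta> i\<bar>"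
  obtain g where g: "g \<in> free_carrier k" "g \<in> R i" "norm (y i g) > K'" using unb by blast
  have "(\<Sum>j\<le>?D. \<beta> j *\<^sub>R y j g) = (\<Sum>j\<le>?D. if j = i then \<beta> i *\<^sub>R y i g else 0)"
  proof (rule sum.cong)
    fix j assume "j \<in> {..?D}"
    have "j \<noteq> i \<Longrightarrow> y j g = 0" using zero g(2) by metis
    then show "\<beta> j *\<^sub>R y j g = (if j = i then \<beta> i *\<^sub>R y i g else 0)" by auto
  qed simp
  also have "\<dots> = \<beta> i *\<^sub>R y i g" using i(1) by simp
  finally have s1: "(\<Sum>j\<le>?D. \<beta> j *\<^sub>R y j g) = \<beta> i *\<^sub>R y i g" .
  have "(\<Sum>j\<le>?D. \<beta> j *\<^sub>R \<Phi> g (x j)) = \<Phi> g (\<Sum>j\<le>?D. \<beta> j *\<^sub>R x j)"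
    using linG[OF g(1)] by (simp add: linear_sum linear_scale)
  also have "\<dots> = 0" using dep linG[OF g(1)] by (simp add: linear_0)
  finally have s2: "(\<Sum>j\<le>?D. \<beta> j *\<^sub>R \<Phi> g (x j)) = 0" .
  have "\<beta> i *\<^sub>R y i g = (\<Sum>j\<le>?D. \<beta> j *\<^sub>R (y j g - \<Phi> g (x j)))"
    using s1 s2 by (simp add: scaleR_diff_right sum_subtractf)
  then have "norm (\<beta> i *\<^sub>R y i g) \<le> (\<Sum>j\<le>?D. norm (\<beta> j *\<^sub>R (y j g - \<Phi> g (x j))))"
    using norm_sum by metis
  then have "\<bar>\<beta> i\<bar> * norm (y i g) \<le> (\<Sum>j\<le>?D. norm (\<beta> j *\<^sub>R (y j g - \<Phi> g (x j))))"
    by simp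
  also have "\<dots> \<le> (\<Sum>j\<le>?D. \<bar>\<beta> j\<bar> * K j)"
  proof (rule sum_mono)
    fix j
    show "norm (\<beta> j *\<^sub>R (y j g - \<Phi> g (x j))) \<le> \<bar>\<beta> j\<bar> * K j"
      using xK[OF g(1), of j] by (simp add: mult_left_mono)
  qed
  finally have "norm (y i g) \<le> K'" using i(2) unfolding K'_def
    by (simp add: pos_le_divide_eq mult.commute)
  then show False using g(3) by simp
qed

abbreviation "vv j \<equiv> ((1::nat, True) # replicate j (0::nat, True))"

lemma vv_carrier: "vv j \<in> free_carrier k"
  using k2 reduced_v[of j] unfolding free_carrier_def by auto

lemma case1:
  assumes sh: "has_shadowing k \<Phi>"
    and z: "\<And>K. \<exists>h. h @ [(1, True)] \<in> free_carrier k \<and> norm (\<Phi> h z) > K"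
  shows False
proof -
  define w where "w j = inv (\<Phi> (vv j)) z" for j
  define y where "y j g = (if g \<in> region (vv j) then \<Phi> g (w j) else 0)" for j g
  show False
  proof (rule family_contra[OF sh, of y "\<lambda>j. region (vv j)"])
    fix j
    have "\<exists>G'. \<forall>s\<in>free_gens k. \<forall>g\<in>free_carrier k.
     norm ((\<lambda>g. if g \<in> region (vv j) then \<Phi> g (w j) else 0) (free_mult s g)
       - \<Phi> s ((\<lambda>g. if g \<in> region (vv j) then \<Phi> g (w j) else 0) g)) \<le> G'"
    proof (rule region_pt)
      fix s g assume "s \<in> free_gens k" "g \<in> free_carrier k"
      then show "norm (\<Phi> (free_mult s g) (w j) - \<Phi> s (\<Phi> g (w j))) \<le> 0"
        using act_mult gens_carrier by simp
    qed simp
    then show "\<exists>G. \<forall>s\<in>free_gens k. \<forall>g\<in>free_carrier k. norm (y j (free_mult s g) - \<Phi> s (y j g)) \<le> G"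
      unfolding y_def by simp
  next
    fix i j g assume "i \<noteq> j" "g \<in> region (vv i)"
    then show "y j g = 0" using region_disjoint unfolding y_def by auto
  next
    fix j K
    obtain h where h: "h @ [(1, True)] \<in> free_carrier k" "norm (\<Phi> h z) > K" using z by blast
    note hv = hv_carrier[OF h(1), of j]
    have "y j (h @ vv j) = \<Phi> h z"
      using hv Phi_inv[OF vv_carrier] unfolding y_def w_def region_def by auto
    then show "\<exists>g\<in>free_carrier k. g \<in> region (vv j) \<and> norm (y j g) > K"
      using hv h(2) unfolding region_def by (intro bexI[of _ "h @ vv j"]) auto
  qed
qed

lemma case2:
  assumes sh: "has_shadowing k \<Phi>"
    and bnd: "\<And>z. \<exists>K. \<forall>h. h @ [(1, True)] \<in> free_carrier k \<longrightarrow> norm (\<Phi> h z) \<le> K"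
  shows False
proof -
  let ?H = "{h. h @ [(1::nat, True)] \<in> free_carrier k}"
  have linH: "\<forall>h\<in>?H. linear (\<Phi> h)" using hv_carrier[of _ 0] linG by blast
  have "\<forall>z. \<exists>K. \<forall>h\<in>?H. norm (\<Phi> h z) \<le> K" using bnd by auto
  then obtain M where M: "M > 0" "\<And>h x. h @ [(1, True)] \<in> free_carrier k \<Longrightarrow> norm (\<Phi> h x) \<le> M * norm x"
    using uniform_bound[OF linH] by auto
  define z0 :: "real^'m" where "z0 = (\<chi> i. 1)"
  have z0: "z0 \<noteq> 0" unfolding z0_def by (simp add: vec_eq_iff)
  then have nz: "norm z0 > 0" by simp
  obtain K0 where K0: "\<And>h. h @ [(1, True)] \<in> free_carrier k \<Longrightarrow> norm (\<Phi> h z0) \<le> K0" using bnd by blast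
  define w where "w j = inv (\<Phi> (vv j)) z0" for j
  define y where "y j g = (if g \<in> region (vv j) then real (length g) *\<^sub>R \<Phi> g (w j) else 0)" for j g
  show False
  proof (rule family_contra[OF sh, of y "\<lambda>j. region (vv j)"])
    fix j
    have "\<exists>G'. \<forall>s\<in>free_gens k. \<forall>g\<in>free_carrier k.
     norm ((\<lambda>g. if g \<in> region (vv j) then real (length g) *\<^sub>R \<Phi> g (w j) else 0) (free_mult s g)
       - \<Phi> s ((\<lambda>g. if g \<in> region (vv j) then real (length g) *\<^sub>R \<Phi> g (w j) else 0) g)) \<le> G'"
    proof (rule region_pt)
      fix s g assume s: "s \<in> free_gens k" and g: "g \<in> free_carrier k" and "g \<in> region (vv j)"
        and sg: "free_mult s g \<in> region (vv j)"
      obtain s0 where s0: "s = [s0]" "fst s0 < k" using s unfolding free_gens_def by auto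
      have fm: "free_mult s g = red_cons s0 g" using s0 by (simp add: free_mult_single)
      have sgc: "free_mult s g \<in> free_carrier k" using fm red_cons_carrier[OF g s0(2)] by simp
      obtain h' where h': "free_mult s g = h' @ vv j" "h' @ [(1, True)] \<in> free_carrier k"
        using region_prefix[OF sgc sg] by blast
      have e1: "\<Phi> (free_mult s g) (w j) = \<Phi> h' z0"
        using hv_carrier[OF h'(2), of j] h'(1) Phi_inv[OF vv_carrier] unfolding w_def by simp
      have e2: "\<Phi> s (real (length g) *\<^sub>R \<Phi> g (w j)) = real (length g) *\<^sub>R \<Phi> (free_mult s g) (w j)"
        using linG[OF gens_carrier[OF s]] act_mult[OF gens_carrier[OF s] g] by (simp add: linear_scale)
      have d1: "\<bar>real (length (free_mult s g)) - real (length g)\<bar> = 1"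
        using red_cons_length[of s0 g] fm by auto
      have "real (length (free_mult s g)) *\<^sub>R \<Phi> (free_mult s g) (w j) - \<Phi> s (real (length g) *\<^sub>R \<Phi> g (w j))
          = (real (length (free_mult s g)) - real (length g)) *\<^sub>R \<Phi> h' z0"
        using e1 e2 by (simp add: scaleR_diff_left)
      then show "norm (real (length (free_mult s g)) *\<^sub>R \<Phi> (free_mult s g) (w j) - \<Phi> s (real (length g) *\<^sub>R \<Phi> g (w j))) \<le> K0"
        using d1 K0[OF h'(2)] by simp
    qed simp
    then show "\<exists>G. \<forall>s\<in>free_gens k. \<forall>g\<in>free_carrier k. norm (y j (free_mult s g) - \<Phi> s (y j g)) \<le> G"
      unfolding y_def by simp
  next
    fix i j g assume "i \<noteq> j" "g \<in> region (vv i)"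
    then show "y j g = 0" using region_disjoint unfolding y_def by auto
  next
    fix j K
    obtain n :: nat where n: "real n > K * M / norm z0" using reals_Archimedean2 by blast
    let ?a = "replicate n (0::nat, True)"
    let ?ai = "replicate n (0::nat, False)"
    have ca: "?a @ [(1, True)] \<in> free_carrier k" using reduced_rep_snoc[of n True] k2
      unfolding free_carrier_def by auto
    have cai: "?ai @ [(1, True)] \<in> free_carrier k" using reduced_rep_snoc[of n False] k2
      unfolding free_carrier_def by auto
    note hv = hv_carrier[OF ca, of j]
    note hvi = hv_carrier[OF cai, of 0]
    have "\<Phi> ?ai (\<Phi> ?a z0) = z0"
      using act_mult[of ?ai ?a z0] hv hvi free_mult_replicate[of n 0 0] act_one by simp
    then have "norm z0 \<le> M * norm (\<Phi> ?a z0)" using M(2)[OF cai] by metis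
    then have low: "norm z0 / M \<le> norm (\<Phi> ?a z0)" using M(1) by (simp add: divide_le_eq mult.commute)
    have yv: "y j (?a @ vv j) = real (n + Suc j) *\<^sub>R \<Phi> ?a z0"
      using hv Phi_inv[OF vv_carrier] unfolding y_def w_def region_def by auto
    have "K < real n * (norm z0 / M)" using n M(1) nz by (simp add: field_simps)
    also have "\<dots> \<le> real (n + Suc j) * norm (\<Phi> ?a z0)"
      using low M(1) by (intro mult_mono) auto
    also have "\<dots> = norm (y j (?a @ vv j))" using yv by simp
    finally show "\<exists>g\<in>free_carrier k. g \<in> region (vv j) \<and> norm (y j g) > K"
      using hv unfolding region_def by (intro bexI[of _ "?a @ vv j"]) auto
  qed
qed

lemma main: "\<not> has_shadowing k \<Phi>"
proof
  assume sh: "has_shadowing k \<Phi>"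
  show False
  proof (cases "\<exists>z. \<forall>K. \<exists>h. h @ [(1, True)] \<in> free_carrier k \<and> norm (\<Phi> h z) > K")
    case True then show False using case1[OF sh] by blast
  next
    case False
    then have "\<And>z. \<exists>K. \<forall>h. h @ [(1, True)] \<in> free_carrier k \<longrightarrow> norm (\<Phi> h z) \<le> K"
      by (meson not_less)
    then show False using case2[OF sh] by blast
  qed
qed

end

theorem theorem3:
  fixes k :: nat and \<Phi> :: "fword \<Rightarrow> real^'m \<Rightarrow> real^'m"
  assumes "k \<ge> 2"
    and "free_action k \<Phi>"
    and "\<forall>g\<in>free_carrier k. linear (\<Phi> g) \<and> bij (\<Phi> g)"
  shows "\<not> has_shadowing k \<Phi>"
  using main[OF assms] .

end
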